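(* Let $k\ge3$ be an integer and let $n$ be such that $x_k(n-1)\ge \frac{26}{\sqrt{\alpha_k}}$. Then $$1-\Theta_M(n)\ge \frac{\sqrt{\alpha_k}\,\pi^4}{36\,x_k(n+1)^3}.$$
   Context: Let $x_k(n):=\frac{\pi\sqrt{24n-(2k+2)}}{6}$, $\alpha_k:=\frac{5k+2}{2k+1}$, $M_k(n):=\frac{\pi^3\alpha_k}{18x_k(n)^2}I_2(\sqrt{\alpha_k}x_k(n))$ with $I_2$ the modified Bessel function of the first kind of order $2$, and $\Theta_M(n):=\frac{M_k(n-1)M_k(n+1)}{M_k(n)^2}$. *)

theory Defs
  imports "HOL-Analysis.Analysis"
begin

definition besselI :: "nat \<Rightarrow> real \<Rightarrow> real" where
  "besselI \<nu> x = (\<Sum>m. (x / 2) ^ (2 * m + \<nu>) / (fact m * fact (m + \<nu>)))"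

definition xk :: "int \<Rightarrow> real \<Rightarrow> real" where
  "xk k n = pi * sqrt (24 * n - (2 * of_int k + 2)) / 6"

definition alphak :: "int \<Rightarrow> real" where
  "alphak k = (5 * of_int k + 2) / (2 * of_int k + 1)"

definition Mk :: "int \<Rightarrow> real \<Rightarrow> real" where
  "Mk k n = pi ^ 3 * alphak k / (18 * (xk k n) ^ 2) * besselI 2 (sqrt (alphak k) * xk k n)"

definition ThetaM :: "int \<Rightarrow> real \<Rightarrow> real" where
  "ThetaM k n = Mk k (n - 1) * Mk k (n + 1) / (Mk k n) ^ 2"

end

theory Submission
  imports Defs
begin

definition P :: "nat \<Rightarrow> real \<Rightarrow> real" where
  "P k t = (\<Sum>m. t^m / (fact m * fact (m+k)))"

lemma P_summable: "summable (\<lambda>m. t^m / (fact m * fact (m+k)) :: real)"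
proof (rule summable_comparison_test[OF _ summable_exp[of "\<bar>t\<bar>"]])
  show "\<exists>N. \<forall>n\<ge>N. norm (t^n / (fact n * fact (n+k))) \<le> inverse (fact n) * \<bar>t\<bar>^n"
  proof (intro exI allI impI)
    fix n :: nat
    have f1: "(1::real) \<le> fact (n+k)" by simp
    have "norm (t^n / (fact n * fact (n+k))) = \<bar>t\<bar>^n / (fact n * fact (n+k))"
      by (simp add: abs_mult power_abs)
    also have "\<dots> \<le> \<bar>t\<bar>^n / (fact n * 1)"
      by (intro divide_left_mono mult_left_mono f1) auto
    finally show "norm (t^n / (fact n * fact (n+k))) \<le> inverse (fact n) * \<bar>t\<bar>^n"
      by (simp add: field_simps)
  qed
qed

lemma P_sums: "(\<lambda>m. t^m / (fact m * fact (m+k))) sums P k t"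
  unfolding P_def using P_summable summable_sums by blast

lemma P_deriv: "(P k has_real_derivative P (Suc k) t) (at t)"
proof -
  define c where "c = (\<lambda>m. 1 / (fact m * fact (m+k)) :: real)"
  have e: "P k = (\<lambda>t. \<Sum>n. c n * t^n)" unfolding P_def c_def by (auto intro!: ext)
  have d: "diffs c n = 1 / (fact n * fact (n + Suc k))" for n
  proof -
    have "Suc n + k = n + Suc k" by simp
    moreover have "fact (Suc n) = real (Suc n) * fact n" by simp
    ultimately show ?thesis unfolding diffs_def c_def
      by (metis (no_types) mult.assoc nonzero_mult_divide_mult_cancel_left of_nat_eq_0_iff nat.simps(3) times_divide_eq_right mult_1_right)
  qed
  have "((\<lambda>t. \<Sum>n. c n * t^n) has_real_derivative (\<Sum>n. diffs c n * t^n)) (at t)"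
    by (rule termdiffs_strong_converges_everywhere) (use P_summable in \<open>simp add: c_def\<close>)
  then show ?thesis unfolding e d P_def by simp
qed

lemma P_pos: "t \<ge> 0 \<Longrightarrow> P k t > 0"
proof -
  assume t: "t \<ge> 0"
  have "P k t = (\<Sum>m. (\<lambda>m. t^m / (fact m * fact (m+k))) (m + 1)) + 1 / fact k"
    unfolding P_def using suminf_split_head[OF P_summable[of t k]] P_summable[of t k]
    by (simp add: suminf_split_initial_segment[symmetric])
  moreover have "(\<Sum>m. (\<lambda>m. t^m / (fact m * fact (m+k))) (m + 1)) \<ge> 0"
  proof (intro suminf_nonneg)
    show "summable (\<lambda>m. (\<lambda>m. t^m / (fact m * fact (m+k))) (m + 1))"
      using summable_iff_shift[of "\<lambda>m. t^m / (fact m * fact (m+k))" 1] P_summable by blast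
  qed (use t in auto)
  moreover have "1 / fact k > (0::real)" by simp
  ultimately show ?thesis by linarith
qed

lemma P_rec: "P k t = real (k+1) * P (k+1) t + t * P (k+2) t"
proof -
  define f where "f = (\<lambda>m. real m * t^m / (fact m * fact (m+k+1)))"
  have s1: "(\<lambda>m. f (Suc m)) sums (t * P (k+2) t)"
  proof -
    have "(\<lambda>m. t * (t^m / (fact m * fact (m+(k+2))))) sums (t * P (k+2) t)"
      by (rule sums_mult[OF P_sums])
    moreover have "f (Suc m) = t * (t^m / (fact m * fact (m+(k+2))))" for m
    proof -
      have a: "Suc m + k + 1 = m + (k+2)" by simp
      have b: "fact (Suc m) = real (Suc m) * fact m" by simp
      have "f (Suc m) = real (Suc m) * (t * t^m) / (real (Suc m) * fact m * fact (m+(k+2)))"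
        unfolding f_def a b by simp
      also have "\<dots> = t * (t^m / (fact m * fact (m+(k+2))))"
        by (simp del: of_nat_Suc)
      finally show ?thesis .
    qed
    ultimately show ?thesis by simp
  qed
  have s2: "f sums (t * P (k+2) t)"
    using s1 sums_Suc_iff[of f] by (simp add: f_def)
  have s3: "(\<lambda>m. real (k+1) * (t^m / (fact m * fact (m+(k+1))))) sums ((k+1) * P (k+1) t)"
    by (rule sums_mult[OF P_sums])
  have "(\<lambda>m. real (k+1) * (t^m / (fact m * fact (m+(k+1)))) + f m) sums ((k+1) * P (k+1) t + t * P (k+2) t)"
    by (rule sums_add[OF s3 s2])
  moreover have "real (k+1) * (t^m / (fact m * fact (m+(k+1)))) + f m = t^m / (fact m * fact (m+k))" for m
  proof -
    have A1: "fact (m+k+1) = (real (m+k+1)) * fact (m+k)" 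
      unfolding Suc_eq_plus1[symmetric] by (rule fact_Suc)
    have A2: "fact (m+(k+1)) = (real (m+k+1)) * fact (m+k)" 
      unfolding add.assoc[symmetric] by (rule A1)
    moreover have key: "real (k+1) * (x / (G * ((real (m+k+1)) * F))) + real m * x / (G * ((real (m+k+1)) * F)) = x / (G * F)"
      if "G > 0" "F > 0" for x G F :: real
    proof -
      have r: "real (m+k+1) > 0" by simp
      have e: "real (k+1) + real m = real (m+k+1)" by simp
      have "real (k+1) * (x / (G * ((real (m+k+1)) * F))) + real m * x / (G * ((real (m+k+1)) * F))
          = (real (k+1) + real m) * x / (G * ((real (m+k+1)) * F))" by (simp add: add_divide_distrib distrib_right)
      also have "\<dots> = real (m+k+1) * x / (G * ((real (m+k+1)) * F))" by (simp only: e)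
      also have "\<dots> = x / (G * F)"
        using r by simp
      finally show ?thesis .
    qed
    show ?thesis unfolding f_def A1 A2
      by (rule key) simp_all
  qed
  ultimately have "(\<lambda>m. t^m / (fact m * fact (m+k))) sums ((k+1) * P (k+1) t + t * P (k+2) t)" by simp
  from sums_unique2[OF P_sums this] show ?thesis .
qed


definition q :: "real \<Rightarrow> real" where "q t = P 3 t / P 2 t"

lemma P2_rec: "P 2 t = 3 * P 3 t + t * P 4 t"
  using P_rec[of 2 t] by (simp add: numeral_eq_Suc)

lemma q_deriv:
  assumes t: "t > 0"
  shows "(q has_real_derivative ((1 - 3 * q t) / t - (q t)^2)) (at t)"
proof -
  have d2: "(P 2 has_real_derivative P 3 t) (at t)" using P_deriv[of 2 t] by (simp add: numeral_eq_Suc)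
  have d3: "(P 3 has_real_derivative P 4 t) (at t)" using P_deriv[of 3 t] by (simp add: numeral_eq_Suc)
  have pos: "P 2 t > 0" using P_pos t by simp
  have "((\<lambda>x. P 3 x / P 2 x) has_real_derivative (P 4 t * P 2 t - P 3 t * P 3 t) / (P 2 t * P 2 t)) (at t)"
    by (rule DERIV_divide[OF d3 d2]) (use pos in simp)
  moreover have "(P 4 t * P 2 t - P 3 t * P 3 t) / (P 2 t * P 2 t) = (1 - 3 * q t) / t - (q t)^2"
  proof -
    have gen: "(c * a - b * b) / (a * a) = (1 - 3 * (b / a)) / t - (b / a)^2"
      if "a > 0" "t > 0" "a = 3 * b + t * c" for a b c t :: real
    proof -
      have c: "c = (a - 3 * b) / t" using that by (simp add: field_simps)
      show ?thesis unfolding c using that(1,2) by (simp add: field_simps power2_eq_square)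
    qed
    show ?thesis unfolding q_def by (rule gen[OF pos t P2_rec])
  qed
  ultimately show ?thesis unfolding q_def[abs_def] by simp
qed

lemma q_pos: "t \<ge> 0 \<Longrightarrow> q t > 0"
  unfolding q_def using P_pos by simp

lemma q_cont: "continuous_on {a..b} q" if "a > 0"
proof (intro continuous_at_imp_continuous_on ballI)
  fix x assume "x \<in> {a..b}"
  then have "x > 0" using that by auto
  then show "isCont q x" using DERIV_isCont[OF q_deriv] by blast
qed

definition phi :: "real \<Rightarrow> real" where "phi t = 1 / sqrt t - (13/10) / t"

lemma phi_deriv:
  assumes t: "t > 0"
  shows "(phi has_real_derivative (- 1 / (2 * t * sqrt t) + (13/10) / t^2)) (at t)"
proof -
  have st: "sqrt t > 0" using t by simp
  have ss: "sqrt t * sqrt t = t" using t by simp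
  show ?thesis unfolding phi_def[abs_def]
    using t st ss by (auto intro!: derivative_eq_intros simp: field_simps power2_eq_square)
qed

lemma alg1:
  fixes s :: real assumes s: "s > 0"
  shows "(1 - 3*(1/s - (13/10)/(s * s)))/(s * s) - (1/s - (13/10)/(s * s))^2 - (-1/(2*(s * s)* s) + (13/10)/(s * s)^2) > 0"
proof -
  have "(1 - 3*(1/s - (13/10)/(s * s)))/(s * s) - (1/s - (13/10)/(s * s))^2 - (-1/(2*(s * s)* s) + (13/10)/(s * s)^2)
     = (s/10 + 91/100) / s^4"
    using s by (simp add: field_simps power2_eq_square) (simp add: algebra_simps power4_eq_xxxx)
  also have "\<dots> > 0" using s by simp
  finally show ?thesis .
qed
lemma alg2:
  fixes s :: real assumes s: "s \<ge> 13"
  shows "(1 - 3*(1/s - (13/10)/(s * s)))/(s * s) - (1/s - (13/10)/(s * s))^2 \<le> - 1 / (6 * (s * s) * s)"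
proof -
  have "(1 - 3*(1/s - (13/10)/(s * s)))/(s * s) - (1/s - (13/10)/(s * s))^2
     = (-(4/10) * s + 221/100) / s^4"
    using s by (simp add: field_simps power2_eq_square) (simp add: algebra_simps power4_eq_xxxx)
  also have "\<dots> \<le> (-(1/6) * s) / s^4"
    using s by (intro divide_right_mono) auto
  also have "\<dots> = - 1 / (6 * (s * s) * s)" using s by (simp add: field_simps power4_eq_xxxx)
  finally show ?thesis .
qed

lemma phi_cont: "continuous_on {a..b} phi" if "a > 0"
proof (intro continuous_at_imp_continuous_on ballI)
  fix x assume "x \<in> {a..b}"
  then have "x > 0" using that by auto
  then show "isCont phi x" using DERIV_isCont[OF phi_deriv] by blast
qed

lemma phi_small: "0 < t \<Longrightarrow> t \<le> 169/100 \<Longrightarrow> phi t \<le> 0"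
proof -
  assume t: "0 < t" "t \<le> 169/100"
  define s where "s = sqrt t"
  have "sqrt t \<le> sqrt ((13/10)^2)" by (rule real_sqrt_le_mono) (use t in \<open>simp add: power2_eq_square\<close>)
  then have s: "s > 0" "s \<le> 13/10" "t = s * s" using t unfolding s_def by auto
  show ?thesis unfolding phi_def s_def[symmetric] using s by (simp add: field_simps)
qed

lemma q_gt_phi:
  assumes t1: "t1 > 0" shows "q t1 > phi t1"
proof (rule ccontr)
  assume "\<not> q t1 > phi t1"
  then have le: "q t1 - phi t1 \<le> 0" by simp
  define c2 :: real where "c2 = 169/100"
  define g where "g = (\<lambda>t. q t - phi t)"
  have gpos_small: "g t > 0" if "0 < t" "t \<le> c2" for t
    using phi_small[of t] q_pos[of t] that unfolding g_def c2_def by auto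
  have t1c: "t1 > c2" using gpos_small[of t1] le t1 unfolding g_def by force
  have cont: "continuous_on {c2..x} g" for x
    unfolding g_def by (intro continuous_on_diff q_cont phi_cont) (simp add: c2_def)+
  define Z where "Z = {x \<in> {c2..t1}. g x = 0}"
  have "\<exists>x. c2 \<le> x \<and> x \<le> t1 \<and> g x = 0"
    using IVT2'[of g t1 0 c2, OF _ _ _ cont] le gpos_small[of c2] t1c unfolding g_def c2_def by auto
  then have Zne: "Z \<noteq> {}" unfolding Z_def by auto
  have Zcl: "closed Z" unfolding Z_def by (rule continuous_closed_preimage_constant[OF cont]) simp
  have Zbdd: "bdd_below Z" unfolding Z_def by (rule bdd_belowI[of _ c2]) auto
  define t0 where "t0 = Inf Z"
  have t0Z: "t0 \<in> Z" unfolding t0_def using closed_contains_Inf[OF Zne Zbdd Zcl] .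
  have c2pos: "c2 > 0" by (simp add: c2_def)
  have t0c: "t0 > c2"
  proof -
    have "t0 \<ge> c2" "g t0 = 0" using t0Z unfolding Z_def by auto
    moreover have "g c2 > 0" using gpos_small[OF c2pos] by simp
    ultimately show ?thesis by (cases "t0 = c2") auto
  qed
  have t0t1: "t0 \<le> t1" using t0Z unfolding Z_def by auto
  have g0: "g t0 = 0" using t0Z unfolding Z_def by auto
  have before: "g x > 0" if xr: "c2 \<le> x" "x < t0" for x
  proof (rule ccontr)
    assume "\<not> g x > 0"
    then have "g x \<le> 0" by simp
    then obtain y where y: "c2 \<le> y" "y \<le> x" "g y = 0"
      using IVT2'[of g x 0 c2, OF _ _ _ cont] gpos_small[OF c2pos] xr by auto
    then have "y \<in> Z" using xr t0t1 unfolding Z_def by auto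
    then have "t0 \<le> y" unfolding t0_def using Zbdd by (rule cInf_lower)
    then show False using y xr by simp
  qed
  have t0pos: "t0 > 0" using t0c c2pos by simp
  define s where "s = sqrt t0"
  have s: "s > 0" "t0 = s * s" using t0pos unfolding s_def by auto
  have qphi: "q t0 = phi t0" using g0 unfolding g_def by simp
  have phis: "phi t0 = 1/s - (13/10)/(s * s)" unfolding phi_def s_def using t0pos by simp
  have D: "(g has_real_derivative ((1 - 3 * q t0) / t0 - (q t0)^2 - (- 1 / (2 * t0 * sqrt t0) + (13/10) / t0^2))) (at t0)"
    unfolding g_def by (intro DERIV_diff q_deriv phi_deriv t0pos)
  have Dpos: "(1 - 3 * q t0) / t0 - (q t0)^2 - (- 1 / (2 * t0 * sqrt t0) + (13/10) / t0^2) > 0"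
    unfolding qphi phis s_def[symmetric] using alg1[OF s(1)] unfolding s(2)[symmetric]
    by (simp add: s(2) power2_eq_square)
  obtain d where d: "d > 0" "\<And>h. h > 0 \<Longrightarrow> h < d \<Longrightarrow> g (t0 - h) < g t0"
    using DERIV_pos_inc_left[OF D Dpos] by blast
  define h where "h = min (d/2) ((t0 - c2)/2)"
  have "g (t0 - h) < 0" using d(2)[of h] d(1) t0c g0 unfolding h_def by auto
  moreover have "h \<le> (t0 - c2)/2" "h > 0" using d(1) t0c unfolding h_def by (simp_all add: min_def)
  then have "g (t0 - h) > 0" by (intro before) auto
  ultimately show False by simp
qed


definition dq :: "real \<Rightarrow> real" where "dq t = (1 - 3 * q t) / t - (q t)^2"

lemma dq_bound:
  assumes t: "t \<ge> 169" shows "dq t \<le> - 1 / (6 * t * sqrt t)"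
proof -
  define s where "s = sqrt t"
  have "sqrt t \<ge> sqrt (13^2)" by (rule real_sqrt_le_mono) (use t in simp)
  then have s: "s \<ge> 13" "t = s * s" using t unfolding s_def by auto
  have phis: "phi t = 1/s - (13/10)/(s * s)" unfolding phi_def s_def using t by simp
  have "phi t = (s - 13/10) / (s * s)" unfolding phis using s by (simp add: field_simps)
  then have phip: "phi t > 0" using s by simp
  have qp: "q t > phi t" using q_gt_phi t by simp
  have tp: "t > 0" using t by simp
  have "dq t \<le> (1 - 3 * phi t) / t - (phi t)^2"
  proof -
    have "3 * phi t / t \<le> 3 * q t / t" using qp tp by (simp add: divide_right_mono)
    moreover have "(phi t)^2 \<le> (q t)^2" using qp phip by (simp add: power_mono)
    ultimately show ?thesis unfolding dq_def by (simp add: diff_divide_distrib)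
  qed
  also have "\<dots> \<le> - 1 / (6 * (s * s) * s)" unfolding phis using alg2[OF s(1)] by (simp only: s(2)[symmetric])
  also have "\<dots> = - 1 / (6 * t * sqrt t)" unfolding s_def[symmetric] s(2)[symmetric] by (rule refl)
  finally show ?thesis .
qed

lemma q_deriv': "t > 0 \<Longrightarrow> (q has_real_derivative dq t) (at t)"
  unfolding dq_def by (rule q_deriv)

lemma L_deriv: "t > 0 \<Longrightarrow> ((\<lambda>x. ln (P 2 x)) has_real_derivative q t) (at t)"
proof -
  assume t: "t > 0"
  have p: "P 2 t > 0" using P_pos t by simp
  have d2: "(P 2 has_real_derivative P 3 t) (at t)" using P_deriv[of 2 t] by (simp add: numeral_eq_Suc)
  have "((\<lambda>x. ln (P 2 x)) has_real_derivative inverse (P 2 t) * P 3 t) (at t)"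
    by (rule DERIV_chain2[where f=ln and g="P 2", OF DERIV_ln[OF p] d2])
  then show ?thesis unfolding q_def by (simp add: field_simps)
qed

lemma main_ineq:
  fixes v \<delta> :: real
  assumes d0: "\<delta> > 0" and d5: "\<delta> \<le> 5" and v: "v - \<delta> \<ge> 169"
  shows "1 - P 2 (v - \<delta>) * P 2 (v + \<delta>) / (P 2 v)^2 \<ge> \<delta>^2 / (8 * (v + \<delta>) * sqrt (v + \<delta>))"
proof -
  define w where "w = v + \<delta>"
  have w169: "w \<ge> 169" using v d0 unfolding w_def by simp
  have sw: "sqrt w \<ge> 13"
  proof -
    have "sqrt w \<ge> sqrt (13^2)" by (rule real_sqrt_le_mono) (use w169 in simp)
    then show ?thesis by simp
  qed
  define \<kappa> where "\<kappa> = 1 / (6 * w * sqrt w)"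
  have kpos: "\<kappa> > 0" using w169 sw unfolding \<kappa>_def by simp
  have dqk: "dq t \<le> - \<kappa>" if "v - \<delta> \<le> t" "t \<le> v + \<delta>" for t
  proof -
    have t169: "t \<ge> 169" using that v by simp
    have "sqrt t \<le> sqrt w" using that unfolding w_def by simp
    then have "6 * t * sqrt t \<le> 6 * w * sqrt w" using that t169 unfolding w_def
      by (intro mult_mono) auto
    moreover have "6 * t * sqrt t > 0" using t169 by simp
    ultimately have "1 / (6 * w * sqrt w) \<le> 1 / (6 * t * sqrt t)"
      using t169 w169 by (intro divide_left_mono mult_pos_pos) auto
    then show ?thesis using dq_bound[OF t169] unfolding \<kappa>_def by simp
  qed
  define K1 where "K1 = (\<lambda>s. q (v + s) - q (v - s) + 2 * \<kappa> * s)"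
  have K1d: "(K1 has_real_derivative (dq (v + s) + dq (v - s) + 2 * \<kappa>)) (at s)"
    if "0 \<le> s" "s \<le> \<delta>" for s
  proof -
    have a: "v + s > 0" "v - s > 0" using that v by auto
    have d1: "((\<lambda>s. q (v + s)) has_real_derivative dq (v + s) * 1) (at s)"
      by (rule DERIV_chain2[where f=q and g="\<lambda>s. v + s", OF q_deriv'[OF a(1)]]) (auto intro!: derivative_eq_intros)
    have d2: "((\<lambda>s. q (v - s)) has_real_derivative dq (v - s) * (-1)) (at s)"
      by (rule DERIV_chain2[where f=q and g="\<lambda>s. v - s", OF q_deriv'[OF a(2)]]) (auto intro!: derivative_eq_intros)
    have d3: "((\<lambda>s. 2 * \<kappa> * s) has_real_derivative 2 * \<kappa>) (at s)"
      by (auto intro!: derivative_eq_intros)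
    have "(K1 has_real_derivative (dq (v + s) * 1 - dq (v - s) * (-1) + 2 * \<kappa>)) (at s)"
      unfolding K1_def by (intro DERIV_add DERIV_diff d1 d2 d3)
    then show ?thesis by simp
  qed
  have K1neg: "K1 s \<le> 0" if "0 \<le> s" "s \<le> \<delta>" for s
  proof -
    have "K1 s \<le> K1 0"
    proof (rule DERIV_nonpos_imp_nonincreasing[OF that(1)])
      fix x assume x: "0 \<le> x" "x \<le> s"
      have "dq (v + x) \<le> - \<kappa>" "dq (v - x) \<le> - \<kappa>" using x that by (auto intro!: dqk)
      then show "\<exists>y. (K1 has_real_derivative y) (at x) \<and> y \<le> 0"
        using K1d[of x] x that by (intro exI[of _ "dq (v + x) + dq (v - x) + 2 * \<kappa>"]) auto
    qed
    then show ?thesis unfolding K1_def by simp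
  qed
  define L where "L = (\<lambda>t. ln (P 2 t))"
  define K where "K = (\<lambda>s. L (v + s) + L (v - s) - 2 * L v + \<kappa> * s^2)"
  have Kd: "(K has_real_derivative K1 s) (at s)" if "0 \<le> s" "s \<le> \<delta>" for s
  proof -
    have a: "v + s > 0" "v - s > 0" using that v by auto
    have d1: "((\<lambda>s. L (v + s)) has_real_derivative q (v + s) * 1) (at s)"
      unfolding L_def by (rule DERIV_chain2[where f="\<lambda>x. ln (P 2 x)" and g="\<lambda>s. v + s", OF L_deriv[OF a(1)]]) (auto intro!: derivative_eq_intros)
    have d2: "((\<lambda>s. L (v - s)) has_real_derivative q (v - s) * (-1)) (at s)"
      unfolding L_def by (rule DERIV_chain2[where f="\<lambda>x. ln (P 2 x)" and g="\<lambda>s. v - s", OF L_deriv[OF a(2)]]) (auto intro!: derivative_eq_intros)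
    have d3: "((\<lambda>s. \<kappa> * s^2) has_real_derivative \<kappa> * (2 * s)) (at s)"
      by (auto intro!: derivative_eq_intros)
    have d4: "((\<lambda>s. 2 * L v) has_real_derivative 0) (at s)" by simp
    have "(K has_real_derivative (q (v + s) * 1 + q (v - s) * (-1) - 0 + \<kappa> * (2 * s))) (at s)"
      unfolding K_def by (intro DERIV_add DERIV_diff d1 d2 d3 d4)
    then show ?thesis unfolding K1_def by (simp add: algebra_simps)
  qed
  have "K \<delta> \<le> K 0"
  proof (rule DERIV_nonpos_imp_nonincreasing[of 0 \<delta> K])
    show "0 \<le> \<delta>" using d0 by simp
    fix x assume x: "0 \<le> x" "x \<le> \<delta>"
    then show "\<exists>y. (K has_real_derivative y) (at x) \<and> y \<le> 0"
      using Kd[OF x] K1neg[OF x] by blast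
  qed
  then have Lineq: "L (v + \<delta>) + L (v - \<delta>) - 2 * L v \<le> - (\<kappa> * \<delta>^2)" unfolding K_def by simp
  have pp: "P 2 (v - \<delta>) > 0" "P 2 (v + \<delta>) > 0" "P 2 v > 0" using P_pos v d0 by auto
  have R: "P 2 (v - \<delta>) * P 2 (v + \<delta>) / (P 2 v)^2 = exp (L (v + \<delta>) + L (v - \<delta>) - 2 * L v)"
  proof -
    have e2: "exp (2 * ln (P 2 v)) = P 2 v * P 2 v" using pp(3)
      by (simp only: mult_2 exp_add exp_ln)
    show ?thesis unfolding L_def using pp e2 by (simp add: exp_diff exp_add power2_eq_square)
  qed
  define z where "z = \<kappa> * \<delta>^2"
  have zpos: "z > 0" unfolding z_def using kpos d0 by simp
  have "exp (L (v + \<delta>) + L (v - \<delta>) - 2 * L v) \<le> exp (- z)" using Lineq unfolding z_def by simp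
  also have "exp (- z) = 1 / exp z" by (simp add: exp_minus field_simps)
  also have "1 / exp z \<le> 1 / (1 + z)"
    using zpos by (intro divide_left_mono) (auto simp: exp_ge_add_one_self add_pos_pos)
  finally have Rle: "P 2 (v - \<delta>) * P 2 (v + \<delta>) / (P 2 v)^2 \<le> 1 / (1 + z)" unfolding R .
  have z13: "z \<le> 1/3"
  proof -
    have "6 * w * sqrt w \<ge> 6 * 169 * 13" using w169 sw by (intro mult_mono) auto
    then have "\<kappa> \<le> 1 / (6 * 169 * 13)" unfolding \<kappa>_def by (intro divide_left_mono) auto
    moreover have "\<delta>^2 \<le> 5^2" using d0 d5 by (intro power_mono) auto
    ultimately have "z \<le> 1 / (6 * 169 * 13) * 25" unfolding z_def using kpos by (intro mult_mono) auto
    then show ?thesis by simp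
  qed
  have "1 - 1 / (1 + z) = z / (1 + z)" using zpos by (simp add: field_simps)
  also have "\<dots> \<ge> z * (3/4)" using zpos z13 by (simp add: field_simps)
  finally have "1 - P 2 (v - \<delta>) * P 2 (v + \<delta>) / (P 2 v)^2 \<ge> z * (3/4)" using Rle by linarith
  moreover have "z * (3/4) = \<delta>^2 / (8 * (v + \<delta>) * sqrt (v + \<delta>))"
  proof -
    have nz: "w * sqrt w \<noteq> 0" using w169 sw by simp
    have "z * (3/4) = \<delta>^2 / (8 * w * sqrt w)" unfolding z_def \<kappa>_def using nz
      by (simp add: field_simps)
    then show ?thesis unfolding w_def .
  qed
  ultimately show ?thesis by linarith
qed


lemma besselI2_eq: "besselI 2 y = (y/2)^2 * P 2 ((y/2)^2)"
proof -
  have "(\<lambda>m. (y/2)^2 * (((y/2)^2)^m / (fact m * fact (m+2)))) sums ((y/2)^2 * P 2 ((y/2)^2))"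
    by (rule sums_mult[OF P_sums])
  moreover have "(y/2)^2 * (((y/2)^2)^m / (fact m * fact (m+2))) = (y / 2) ^ (2 * m + 2) / (fact m * fact (m + 2))" for m
  proof -
    have e: "(y/2)^(2*m+2) = (y/2)^2 * ((y/2)^2)^m"
      by (simp only: power_add power_mult) (rule mult.commute)
    show ?thesis unfolding e by simp
  qed
  ultimately have "(\<lambda>m. (y / 2) ^ (2 * m + 2) / (fact m * fact (m + 2))) sums ((y/2)^2 * P 2 ((y/2)^2))" by simp
  then show ?thesis unfolding besselI_def by (rule sums_unique[symmetric])
qed

lemma Mk_eq:
  assumes a: "alphak k > 0" and rho: "\<rho> > 0" "\<rho> = 24 * m - (2 * of_int k + 2)"
  shows "Mk k m = pi^3 * (alphak k)^2 / 72 * P 2 (alphak k * pi^2 * \<rho> / 144)"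
proof -
  define a where "a = alphak k"
  have x: "xk k m = pi * sqrt \<rho> / 6" unfolding xk_def rho(2) ..
  have x2: "(xk k m)^2 = pi^2 * \<rho> / 36" unfolding x using rho(1) by (simp add: power_divide power_mult_distrib)
  have y2: "(sqrt a * xk k m / 2)^2 = a * pi^2 * \<rho> / 144"
    using a unfolding a_def[symmetric] by (simp add: power_divide power_mult_distrib x2)
  have "Mk k m = pi ^ 3 * a / (18 * (pi^2 * \<rho> / 36)) * ((a * pi^2 * \<rho> / 144) * P 2 (a * pi^2 * \<rho> / 144))"
    unfolding Mk_def a_def[symmetric] besselI2_eq y2 x2 ..
  also have "\<dots> = pi^3 * a^2 / 72 * P 2 (a * pi^2 * \<rho> / 144)"
    using rho(1) pi_gt_zero by (simp add: field_simps power2_eq_square power3_eq_cube)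
  finally show ?thesis unfolding a_def .
qed

theorem lemma4p3:
  fixes k :: int and n :: nat
  assumes "k \<ge> 3"
    and "xk k (real n - 1) \<ge> 26 / sqrt (alphak k)"
  shows "1 - ThetaM k (real n) \<ge> sqrt (alphak k) * pi ^ 4 / (36 * (xk k (real n + 1)) ^ 3)"
proof -
  define a where "a = alphak k"
  have k3: "real_of_int k \<ge> 3" using assms(1) by simp
  have apos: "a > 0" unfolding a_def alphak_def using k3 by simp
  have a52: "a \<le> 5/2" unfolding a_def alphak_def using k3 by (simp add: field_simps)
  define r where "r = 24 * real n - (2 * of_int k + 2)"
  have xm: "xk k (real n - 1) = pi * sqrt (r - 24) / 6" unfolding xk_def r_def by (simp add: algebra_simps)
  have sa: "sqrt a > 0" using apos by simp
  have h: "pi * sqrt (r - 24) / 6 \<ge> 26 / sqrt a" using assms(2) unfolding xm a_def .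
  moreover have "26 / sqrt a > 0" using sa by simp
  ultimately have "pi * sqrt (r - 24) / 6 > 0" by linarith
  then have "sqrt (r - 24) > 0" using pi_gt_zero by (simp add: zero_less_mult_iff zero_less_divide_iff)
  then have r24: "r - 24 > 0" by simp
  have "(26 / sqrt a)^2 \<le> (pi * sqrt (r - 24) / 6)^2"
    using h sa by (intro power_mono) auto
  then have "676 / a \<le> pi^2 * (r - 24) / 36"
    using apos r24 by (simp add: power_divide power_mult_distrib)
  then have "676 \<le> a * (pi^2 * (r - 24) / 36)" using apos by (simp add: field_simps)
  moreover have "a * pi^2 * r / 144 - a * pi^2 / 6 = a * (pi^2 * (r - 24) / 36) / 4" by (simp add: field_simps)
  ultimately have vd: "a * pi^2 * r / 144 - a * pi^2 / 6 \<ge> 169" by linarith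
  define v where "v = a * pi^2 * r / 144"
  define \<delta> where "\<delta> = a * pi^2 / 6"
  have d0: "\<delta> > 0" unfolding \<delta>_def using apos by simp
  have d5: "\<delta> \<le> 5"
  proof -
    have "pi^2 \<le> (16/5)^2" using pi_approx(2) pi_gt_zero by (intro power_mono) auto
    then have "a * pi^2 \<le> 5/2 * (16/5)^2" using apos a52 by (intro mult_mono) auto
    then show ?thesis unfolding \<delta>_def by (simp add: power2_eq_square)
  qed
  have v169: "v - \<delta> \<ge> 169" using vd unfolding v_def \<delta>_def .
  have M0: "Mk k (real n) = pi^3 * a^2 / 72 * P 2 v"
    using Mk_eq[of k r "real n"] apos r24 unfolding a_def v_def r_def by simp
  have M1: "Mk k (real n - 1) = pi^3 * a^2 / 72 * P 2 (v - \<delta>)"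
  proof -
    have "Mk k (real n - 1) = pi^3 * a^2 / 72 * P 2 (a * pi^2 * (r - 24) / 144)"
      using Mk_eq[of k "r - 24" "real n - 1"] apos r24 unfolding a_def r_def by (simp add: algebra_simps)
    moreover have "a * pi^2 * (r - 24) / 144 = v - \<delta>" unfolding v_def \<delta>_def by (simp add: field_simps)
    ultimately show ?thesis by simp
  qed
  have M2: "Mk k (real n + 1) = pi^3 * a^2 / 72 * P 2 (v + \<delta>)"
  proof -
    have "Mk k (real n + 1) = pi^3 * a^2 / 72 * P 2 (a * pi^2 * (r + 24) / 144)"
      using Mk_eq[of k "r + 24" "real n + 1"] apos r24 unfolding a_def r_def by (simp add: algebra_simps)
    moreover have "a * pi^2 * (r + 24) / 144 = v + \<delta>" unfolding v_def \<delta>_def by (simp add: field_simps)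
    ultimately show ?thesis by simp
  qed
  have Cpos: "pi^3 * a^2 / 72 > 0" using apos by simp
  have Th: "ThetaM k (real n) = P 2 (v - \<delta>) * P 2 (v + \<delta>) / (P 2 v)^2"
    unfolding ThetaM_def M0 M1 M2 using Cpos apos by (simp add: field_simps power2_eq_square)
  have RHS: "sqrt a * pi ^ 4 / (36 * (xk k (real n + 1)) ^ 3) = \<delta>^2 / (8 * (v + \<delta>) * sqrt (v + \<delta>))"
  proof -
    define R where "R = sqrt (r + 24)"
    define A where "A = sqrt a"
    have Rp: "R > 0" unfolding R_def using r24 by simp
    have Ap: "A > 0" unfolding A_def using apos by simp
    have x1: "xk k (real n + 1) = pi * R / 6" unfolding xk_def R_def r_def by (simp add: algebra_simps)
    have aA: "a = A^2" unfolding A_def using apos by simp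
    have rR: "r + 24 = R^2" unfolding R_def using r24 by simp
    have vd2: "v + \<delta> = (A * pi * R / 12)^2" unfolding v_def \<delta>_def
      by (simp add: field_simps power_mult_distrib aA rR[symmetric])
    have svd: "sqrt (v + \<delta>) = A * pi * R / 12" unfolding vd2 using Ap Rp pi_gt_zero by simp
    have l: "A * pi^4 / (36 * (pi * R / 6)^3) = 6 * A * pi / R^3"
      using Ap Rp by (simp add: field_simps power3_eq_cube power4_eq_xxxx)
    have rr: "(A^2 * pi^2 / 6)^2 / (8 * (A * pi * R / 12)^2 * (A * pi * R / 12)) = 6 * A * pi / R^3"
      using Ap Rp by (simp add: field_simps power3_eq_cube power2_eq_square)
    have dd: "\<delta> = A^2 * pi^2 / 6" unfolding \<delta>_def aA ..
    show ?thesis unfolding x1 svd A_def[symmetric] unfolding vd2 unfolding dd l rr ..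
  qed
  show ?thesis unfolding a_def[symmetric] Th RHS using main_ineq[OF d0 d5 v169] .
qed

end
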